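(* Let $\mathcal H,\mathcal U$ be Hilbert spaces, $H,H_n$ ($n\in\mathbb{N}$) lower semibounded self-adjoint operators on $\mathcal H$ with a common lower bound $a\in\mathbb{R}$ such that $\mathrm e^{-tH_n}\to\mathrm e^{-tH}$ strongly for all $t>0$, and $B,B_n$ bounded operators $\mathcal U\to\mathcal H$ with $B_n\to B$ and $B_n^*\to B^*$ strongly. Let $T>0$ and let $\mathcal B^T f=\int_0^T\mathrm e^{-(T-s)H}Bf(s)\,\mathrm ds$, $\mathcal B^T_n f=\int_0^T\mathrm e^{-(T-s)H_n}B_nf(s)\,\mathrm ds$ for $f\in L^2((0,T),\mathcal U)$. For each $n$ let $F_n\colon\mathcal H\to L^2((0,T),\mathcal U)$ be a bounded linear operator with $\mathrm e^{-TH_n}+\mathcal B^T_nF_n=0$, and suppose $(F_n)_n$ converges weakly to some $F\colon\mathcal H\to L^2((0,T),\mathcal U)$ (i.e. $F_nu_0\to Fu_0$ weakly for every $u_0\in\mathcal H$). Then $\mathrm e^{-TH}+\mathcal B^TF=0$, i.e. $F$ is a feedback operator for the system $\partial_tu+Hu=Bf$.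
   Context: Integrals are understood in the weak sense. A map $F\colon\mathcal H\to L^2((0,T),\mathcal U)$ is a feedback operator for $\partial_tu+Hu=Bf$ if $\mathrm e^{-TH}+\mathcal B^TF=0$, i.e. $F$ maps each initial datum $u_0$ to a null-control (a control $f$ with $\mathrm e^{-TH}u_0+\mathcal B^Tf=0$). *)

theory Defs
  imports "HOL-Analysis.Analysis"
begin

text \<open>Hilbert spaces are modelled as (real) types of class real_inner and complete_space.
  The semigroup e^{-tH} of a self-adjoint operator H with lower bound a is modelled by
  a strongly continuous semigroup S of bounded self-adjoint operators with
  norm bound exp(-a t); these are exactly the semigroups e^{-tH} with H self-adjoint, H \<ge> a.\<close>

definition selfadj_semigroup ::
  "real \<Rightarrow> (real \<Rightarrow> 'h::{real_inner,complete_space} \<Rightarrow> 'h) \<Rightarrow> bool" where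
  "selfadj_semigroup a S \<longleftrightarrow>
     (\<forall>t\<ge>0. bounded_linear (S t)) \<and>
     S 0 = id \<and>
     (\<forall>t\<ge>0. \<forall>s\<ge>0. S (t + s) = S t \<circ> S s) \<and>
     (\<forall>x. continuous_on {0..} (\<lambda>t. S t x)) \<and>
     (\<forall>t\<ge>0. \<forall>x y. inner (S t x) y = inner x (S t y)) \<and>
     (\<forall>t\<ge>0. \<forall>x. norm (S t x) \<le> exp (- a * t) * norm x)"

definition L2 :: "real \<Rightarrow> (real \<Rightarrow> 'u::real_normed_vector) \<Rightarrow> bool" where
  "L2 T f \<longleftrightarrow> set_borel_measurable lborel {0<..<T} f \<and>
              set_integrable lborel {0<..<T} (\<lambda>s. (norm (f s))\<^sup>2)"

definition L2_inner :: "real \<Rightarrow> (real \<Rightarrow> 'u::real_inner) \<Rightarrow> (real \<Rightarrow> 'u) \<Rightarrow> real" where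
  "L2_inner T f g = (LINT s:{0<..<T}|lborel. inner (f s) (g s))"

definition L2_norm_sq :: "real \<Rightarrow> (real \<Rightarrow> 'u::real_normed_vector) \<Rightarrow> real" where
  "L2_norm_sq T f = (LINT s:{0<..<T}|lborel. (norm (f s))\<^sup>2)"

definition bounded_linear_L2 :: "real \<Rightarrow> ('h::real_normed_vector \<Rightarrow> real \<Rightarrow> 'u::real_normed_vector) \<Rightarrow> bool" where
  "bounded_linear_L2 T F \<longleftrightarrow>
     (\<forall>x. L2 T (F x)) \<and>
     (\<forall>x y. AE s in lborel. s \<in> {0<..<T} \<longrightarrow> F (x + y) s = F x s + F y s) \<and>
     (\<forall>c x. AE s in lborel. s \<in> {0<..<T} \<longrightarrow> F (c *\<^sub>R x) s = c *\<^sub>R F x s) \<and>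
     (\<exists>C. \<forall>x. L2_norm_sq T (F x) \<le> C * (norm x)\<^sup>2)"

definition L2_weak_conv :: "real \<Rightarrow> (nat \<Rightarrow> real \<Rightarrow> 'u::real_inner) \<Rightarrow> (real \<Rightarrow> 'u) \<Rightarrow> bool" where
  "L2_weak_conv T fs f \<longleftrightarrow>
     (\<forall>g. L2 T g \<longrightarrow> (\<lambda>n. L2_inner T (fs n) g) \<longlonglongrightarrow> L2_inner T f g)"

text \<open>The identity  e^{-TH} u0 + B^T f = 0, with B^T f = \<integral>_0^T e^{-(T-s)H} B f(s) ds
  understood as a weak integral.\<close>
definition null_control_eq ::
  "(real \<Rightarrow> 'h::real_inner \<Rightarrow> 'h) \<Rightarrow> ('u \<Rightarrow> 'h) \<Rightarrow> real \<Rightarrow> 'h \<Rightarrow> (real \<Rightarrow> 'u) \<Rightarrow> bool" where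
  "null_control_eq S B T u0 f \<longleftrightarrow>
     (\<forall>y. inner (S T u0) y + (LINT s:{0<..<T}|lborel. inner (S (T - s) (B (f s))) y) = 0)"

definition feedback_operator ::
  "(real \<Rightarrow> 'h::real_inner \<Rightarrow> 'h) \<Rightarrow> ('u \<Rightarrow> 'h) \<Rightarrow> real \<Rightarrow> ('h \<Rightarrow> real \<Rightarrow> 'u) \<Rightarrow> bool" where
  "feedback_operator S B T F \<longleftrightarrow> (\<forall>u0. null_control_eq S B T u0 (F u0))"

end

theory Submission
  imports Defs
begin
lemma floor_approx_tendsto:
  fixes s :: real
  shows "(\<lambda>k. real_of_int \<lfloor>real (Suc k) * s\<rfloor> / real (Suc k)) \<longlonglongrightarrow> s"
proof (rule tendsto_sandwich[where f="\<lambda>k. s - 1 / real (Suc k)" and h="\<lambda>k. s"])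
  show "\<forall>\<^sub>F k in sequentially. s - 1 / real (Suc k) \<le> real_of_int \<lfloor>real (Suc k) * s\<rfloor> / real (Suc k)"
  proof (intro always_eventually allI)
    fix k
    have "real (Suc k) * s - 1 \<le> real_of_int \<lfloor>real (Suc k) * s\<rfloor>" by linarith
    then have "(real (Suc k) * s - 1) / real (Suc k) \<le> real_of_int \<lfloor>real (Suc k) * s\<rfloor> / real (Suc k)"
      by (rule divide_right_mono) simp
    moreover have "s - 1 / real (Suc k) = (real (Suc k) * s - 1) / real (Suc k)"
      by (simp add: field_simps)
    ultimately show "s - 1 / real (Suc k) \<le> real_of_int \<lfloor>real (Suc k) * s\<rfloor> / real (Suc k)"
      by simp
  qed
  show "\<forall>\<^sub>F k in sequentially. real_of_int \<lfloor>real (Suc k) * s\<rfloor> / real (Suc k) \<le> s"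
  proof (intro always_eventually allI)
    fix k
    have "real_of_int \<lfloor>real (Suc k) * s\<rfloor> \<le> real (Suc k) * s" by linarith
    then show "real_of_int \<lfloor>real (Suc k) * s\<rfloor> / real (Suc k) \<le> s"
      by (simp add: field_simps)
  qed
  show "(\<lambda>k. s - 1 / real (Suc k)) \<longlonglongrightarrow> s"
    using tendsto_diff[OF tendsto_const LIMSEQ_inverse_real_of_nat, of s] by (simp add: inverse_eq_divide)
qed simp

lemma meas_inner_cont:
  fixes f :: "real \<Rightarrow> 'u::real_inner" and p :: "real \<Rightarrow> 'u"
  assumes f: "f \<in> borel_measurable lborel" and p: "continuous_on {0<..<T} p"
  shows "(\<lambda>s. indicator {0<..<T} s * inner (f s) (p s)) \<in> borel_measurable lborel"
proof -
  define G where "G k i s = (if 1 \<le> i \<and> real_of_int i / real (Suc k) < T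
      then inner (f s) (p (real_of_int i / real (Suc k))) else 0)" for k :: nat and i :: int and s
  have innc: "(\<lambda>s. inner (f s) c) \<in> borel_measurable lborel" for c
  proof -
    have "(\<lambda>u. inner u c) \<in> borel_measurable borel"
      by (intro borel_measurable_continuous_onI continuous_intros)
    from measurable_compose[OF f this] show ?thesis .
  qed
  have Gm: "G k i \<in> borel_measurable lborel" for k i
    unfolding G_def using innc by (cases "1 \<le> i \<and> real_of_int i / real (Suc k) < T") auto
  have flm: "(\<lambda>s. \<lfloor>real (Suc k) * s\<rfloor>) \<in> lborel \<rightarrow>\<^sub>M count_space UNIV" for k
  proof -
    have "(\<lambda>s. real (Suc k) * s) \<in> borel_measurable lborel" by measurable
    from measurable_compose[OF this measurable_real_floor] show ?thesis .
  qed
  define \<phi> where "\<phi> k s = indicator {0<..<T} s * G k (\<lfloor>real (Suc k) * s\<rfloor>) s" for k s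
  have \<phi>m: "\<phi> k \<in> borel_measurable lborel" for k
  proof -
    have "(\<lambda>s. G k (\<lfloor>real (Suc k) * s\<rfloor>) s) \<in> borel_measurable lborel"
      by (rule measurable_compose_countable[OF Gm flm])
    then show ?thesis unfolding \<phi>_def by measurable
  qed
  show ?thesis
  proof (rule borel_measurable_LIMSEQ_real[OF _ \<phi>m])
    fix s :: real
    show "(\<lambda>k. \<phi> k s) \<longlonglongrightarrow> indicator {0<..<T} s * inner (f s) (p s)"
    proof (cases "s \<in> {0<..<T}")
      case False then show ?thesis by (simp add: \<phi>_def)
    next
      case True
      define c where "c k = real_of_int \<lfloor>real (Suc k) * s\<rfloor> / real (Suc k)" for k
      have cl: "c \<longlonglongrightarrow> s" unfolding c_def by (rule floor_approx_tendsto)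
      obtain K :: nat where K: "1 / s \<le> real K" using real_arch_simple by blast
      have ev: "1 \<le> \<lfloor>real (Suc k) * s\<rfloor> \<and> c k < T \<and> c k \<in> {0<..<T}" if "k \<ge> K" for k
      proof -
        have s0: "s > 0" "s < T" using True by auto
        have "1 / s \<le> real (Suc k)" using K that by linarith
        then have "1 \<le> real (Suc k) * s" using s0 by (simp add: field_simps)
        then have i1: "1 \<le> \<lfloor>real (Suc k) * s\<rfloor>" by linarith
        have "real_of_int \<lfloor>real (Suc k) * s\<rfloor> \<le> real (Suc k) * s" by linarith
        then have "c k \<le> s" by (simp add: c_def field_simps)
        moreover have "c k > 0" using i1 by (simp add: c_def)
        ultimately show ?thesis using i1 s0 by auto
      qed
      have "(\<lambda>k. p (c k)) \<longlonglongrightarrow> p s"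
        by (rule continuous_on_tendsto_compose[OF p cl True]) (use ev in \<open>auto simp: eventually_sequentially\<close>)
      then have lim: "(\<lambda>k. inner (f s) (p (c k))) \<longlonglongrightarrow> inner (f s) (p s)"
        by (intro tendsto_intros)
      have "inner (f s) (p (c k)) = \<phi> k s" if "k \<ge> K" for k
        using ev[OF that] True unfolding \<phi>_def G_def c_def by simp
      then have "\<forall>\<^sub>F k in sequentially. inner (f s) (p (c k)) = \<phi> k s"
        by (auto simp: eventually_sequentially)
      from tendsto_cong[OF this] lim True show ?thesis by simp
    qed
  qed
qed

lemma summable_norm_cancel_c:
  fixes f :: "nat \<Rightarrow> 'u::{real_normed_vector,complete_space}"
  assumes "summable (\<lambda>n. norm (f n))" shows "summable f"
proof -
  define N where "N = (\<lambda>n. \<Sum>k<n. norm (f k))"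
  have "convergent N" using assms by (simp add: summable_iff_convergent N_def)
  then have CN: "Cauchy N" by (rule convergent_Cauchy)
  have key: "norm ((\<Sum>k<m. f k) - (\<Sum>k<n. f k)) \<le> \<bar>N m - N n\<bar>" for m n
  proof -
    have *: "norm ((\<Sum>k<m. f k) - (\<Sum>k<n. f k)) \<le> N m - N n" if "n \<le> m" for m n
    proof -
      have "(\<Sum>k<m. f k) - (\<Sum>k<n. f k) = (\<Sum>k\<in>{n..<m}. f k)"
        using sum_diff_nat_ivl[of 0 n m f] that by (simp add: lessThan_atLeast0)
      moreover have "N m - N n = (\<Sum>k\<in>{n..<m}. norm (f k))"
        using sum_diff_nat_ivl[of 0 n m "\<lambda>k. norm (f k)"] that by (simp add: N_def lessThan_atLeast0)
      ultimately show ?thesis by (simp add: norm_sum)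
    qed
    show ?thesis
    proof (cases "n \<le> m")
      case True then show ?thesis using *[OF True] by simp
    next
      case False
      then have "norm ((\<Sum>k<n. f k) - (\<Sum>k<m. f k)) \<le> N n - N m" using * by simp
      then show ?thesis by (simp add: norm_minus_commute)
    qed
  qed
  have "Cauchy (\<lambda>n. \<Sum>k<n. f k)"
  proof (rule CauchyI)
    fix e :: real assume "0 < e"
    then obtain M where M: "\<forall>m\<ge>M. \<forall>n\<ge>M. norm (N m - N n) < e" using CN CauchyD by blast
    show "\<exists>M. \<forall>m\<ge>M. \<forall>n\<ge>M. norm ((\<Sum>k<m. f k) - (\<Sum>k<n. f k)) < e"
    proof (intro exI allI impI)
      fix m n assume "M \<le> m" "M \<le> n"
      then have "norm (N m - N n) < e" using M by blast
      then show "norm ((\<Sum>k<m. f k) - (\<Sum>k<n. f k)) < e" using key[of m n] by simp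
    qed
  qed
  then show ?thesis by (simp add: summable_iff_convergent Cauchy_convergent)
qed

lemma amgm:
  fixes x y t :: real assumes "t > 0"
  shows "x * y \<le> (t * x^2 + y^2 / t) / 2"
proof -
  have "(t * x^2 + y^2 / t) / 2 - x * y = (t * x - y)^2 / (2 * t)"
    using assms by (simp add: field_simps power2_eq_square)
  moreover have "(t * x - y)^2 / (2 * t) \<ge> 0" using assms by simp
  ultimately show ?thesis by linarith
qed

lemma inner_amgm:
  fixes a b :: "'a::real_inner" assumes "t > 0"
  shows "\<bar>inner a b\<bar> \<le> (t * (norm a)^2 + (norm b)^2 / t) / 2"
  using Cauchy_Schwarz_ineq2[of a b] amgm[OF assms, of "norm a" "norm b"] by linarith

lemma L2_measurable: "L2 T f \<Longrightarrow> (\<lambda>s. indicator {0<..<T} s *\<^sub>R f s) \<in> borel_measurable lborel"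
  by (simp add: L2_def set_borel_measurable_def)

lemma L2_sq_int: "L2 T f \<Longrightarrow> integrable lborel (\<lambda>s. indicator {0<..<T} s * (norm (f s))^2)"
  by (simp add: L2_def set_integrable_def)

lemma L2_norm_sq_eq: "L2_norm_sq T f = (\<integral>s. indicator {0<..<T} s * (norm (f s))^2 \<partial>lborel)"
  by (simp add: L2_norm_sq_def set_lebesgue_integral_def)

lemma L2_inner_eq: "L2_inner T f g = (\<integral>s. indicator {0<..<T} s * inner (f s) (g s) \<partial>lborel)"
  by (simp add: L2_inner_def set_lebesgue_integral_def)

lemma meas_inner_L2:
  fixes g0 p :: "real \<Rightarrow> 'u::real_inner"
  assumes "L2 T g0" "continuous_on {0<..<T} p"
  shows "(\<lambda>s. indicator {0<..<T} s * inner (g0 s) (p s)) \<in> borel_measurable lborel"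
proof -
  have "(\<lambda>s. indicator {0<..<T} s * inner (indicator {0<..<T} s *\<^sub>R g0 s) (p s)) \<in> borel_measurable lborel"
    by (rule meas_inner_cont[OF L2_measurable[OF assms(1)] assms(2)])
  moreover have "(\<lambda>s. indicator {0<..<T} s * inner (indicator {0<..<T} s *\<^sub>R g0 s) (p s))
      = (\<lambda>s. indicator {0<..<T} s * inner (g0 s) (p s))"
  proof (rule ext)
    fix s show "indicator {0<..<T} s * inner (indicator {0<..<T} s *\<^sub>R g0 s) (p s) = indicator {0<..<T} s * inner (g0 s) (p s)"
      by (cases "s \<in> {0<..<T}") simp_all
  qed
  ultimately show ?thesis by simp
qed

lemma L2_prod_int:
  fixes g0 e :: "real \<Rightarrow> 'u::real_inner"
  assumes g0: "L2 T g0" and ec: "continuous_on {0<..<T} e"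
    and ei: "integrable lborel (\<lambda>s. indicator {0<..<T} s * (norm (e s))^2)"
    and t: "t > 0"
  shows "integrable lborel (\<lambda>s. indicator {0<..<T} s * inner (g0 s) (e s))"
    and "(\<integral>s. \<bar>indicator {0<..<T} s * inner (g0 s) (e s)\<bar> \<partial>lborel)
          \<le> (t * L2_norm_sq T g0 + (\<integral>s. indicator {0<..<T} s * (norm (e s))^2 \<partial>lborel) / t) / 2"
proof -
  define I where "I = {0<..<T::real}"
  have bi: "integrable lborel (\<lambda>s. (t * (indicator I s * (norm (g0 s))^2) + (indicator I s * (norm (e s))^2) / t) / 2)"
    using L2_sq_int[OF g0] ei unfolding I_def by (intro integrable_divide integrable_add integrable_mult_right) auto
  have pw: "\<bar>indicator I s * inner (g0 s) (e s)\<bar> \<le> (t * (indicator I s * (norm (g0 s))^2) + (indicator I s * (norm (e s))^2) / t) / 2" for s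
    using inner_amgm[OF t, of "g0 s" "e s"] by (auto simp: indicator_def)
  have m: "(\<lambda>s. indicator I s * inner (g0 s) (e s)) \<in> borel_measurable lborel"
    unfolding I_def by (rule meas_inner_L2[OF g0 ec])
  show int: "integrable lborel (\<lambda>s. indicator {0<..<T} s * inner (g0 s) (e s))"
    unfolding I_def[symmetric]
    by (rule Bochner_Integration.integrable_bound[OF bi m]) (use order_trans[OF pw abs_ge_self] in \<open>auto intro: AE_I2\<close>)
  have "(\<integral>s. \<bar>indicator I s * inner (g0 s) (e s)\<bar> \<partial>lborel)
       \<le> (\<integral>s. (t * (indicator I s * (norm (g0 s))^2) + (indicator I s * (norm (e s))^2) / t) / 2 \<partial>lborel)"
    by (intro integral_mono bi pw integrable_abs) (use int I_def in simp)
  also have "\<dots> = (t * L2_norm_sq T g0 + (\<integral>s. indicator I s * (norm (e s))^2 \<partial>lborel) / t) / 2"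
    using L2_sq_int[OF g0] ei unfolding I_def L2_norm_sq_eq by simp
  finally show "(\<integral>s. \<bar>indicator {0<..<T} s * inner (g0 s) (e s)\<bar> \<partial>lborel)
          \<le> (t * L2_norm_sq T g0 + (\<integral>s. indicator {0<..<T} s * (norm (e s))^2 \<partial>lborel) / t) / 2"
    unfolding I_def .
qed

lemma sq_bound_aux:
  fixes x W :: real
  assumes x0: "x \<ge> 0" and W0: "W \<ge> 0" and h: "\<And>c. c > 0 \<Longrightarrow> x \<le> c + W / (2 * c)"
  shows "x^2 \<le> 2 * W"
proof (cases "W = 0")
  case True
  have "x \<le> 0" proof (rule field_le_epsilon) fix c :: real assume "0 < c" then show "x \<le> 0 + c" using h[of c] True by simp qed
  then show ?thesis using x0 True by simp
next
  case False
  then have Wp: "W > 0" using W0 by simp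
  define c where "c = sqrt (W / 2)"
  have cp: "c > 0" using Wp by (simp add: c_def)
  have cc: "c * c = W / 2" using W0 by (simp add: c_def)
  have "c + W / (2 * c) = 2 * c" using cp cc by (simp add: field_simps)
  then have "x \<le> 2 * c" using h[OF cp] by simp
  then have "x^2 \<le> (2 * c)^2" using x0 by (intro power_mono) auto
  also have "\<dots> = 2 * W" using cc by (simp add: power2_eq_square algebra_simps)
  finally show ?thesis .
qed

lemma norm_e_bound:
  fixes y c :: real assumes "c > 0"
  shows "y \<le> (c * (1/2)^k + 2^k * y^2 / c) / 2"
proof -
  have t: "c * (1/2)^k > 0" using assms by simp
  have "1 * y \<le> (c * (1/2)^k * 1^2 + y^2 / (c * (1/2)^k)) / 2" by (rule amgm[OF t])
  moreover have "y^2 / (c * (1/2)^k) = 2^k * y^2 / c" by (simp add: power_one_over field_simps)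
  ultimately show ?thesis by simp
qed

lemma summable_norm_c:
  fixes f :: "nat \<Rightarrow> 'u::{real_normed_vector,complete_space}"
  assumes sn: "summable (\<lambda>n. norm (f n))"
  shows "norm (suminf f) \<le> (\<Sum>n. norm (f n))"
proof (rule LIMSEQ_le)
  have "summable f" by (rule summable_norm_cancel_c[OF sn])
  then show "(\<lambda>n. norm (\<Sum>k<n. f k)) \<longlonglongrightarrow> norm (suminf f)"
    by (intro tendsto_norm summable_LIMSEQ)
  show "(\<lambda>n. \<Sum>k<n. norm (f k)) \<longlonglongrightarrow> (\<Sum>n. norm (f n))" by (rule summable_LIMSEQ[OF sn])
  show "\<exists>N. \<forall>n\<ge>N. norm (\<Sum>k<n. f k) \<le> (\<Sum>k<n. norm (f k))" by (auto intro: norm_sum)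
qed

lemma series_L2:
  fixes e :: "nat \<Rightarrow> real \<Rightarrow> 'u::{real_inner,complete_space}"
  assumes ec: "\<And>k. continuous_on {0<..<T} (e k)"
  and ei: "\<And>k. integrable lborel (\<lambda>s. indicator {0<..<T} s * (norm (e k s))^2)"
  and es: "summable (\<lambda>k. 2^k * (\<integral>s. indicator {0<..<T} s * (norm (e k s))^2 \<partial>lborel))"
  shows "\<exists>G. L2 T G \<and> (\<forall>g0. L2 T g0 \<longrightarrow> summable (\<lambda>k. \<bar>L2_inner T g0 (e k)\<bar>)
           \<and> L2_inner T g0 G = (\<Sum>k. L2_inner T g0 (e k)))"
proof -
  define I where "I = {0<..<T::real}"
  have Isets[measurable]: "I \<in> sets lborel" "I \<in> sets borel" by (auto simp: I_def)
  define E where "E k = (\<integral>s. indicator I s * (norm (e k s))^2 \<partial>lborel)" for k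
  have E0: "E k \<ge> 0" for k unfolding E_def by (intro integral_nonneg_AE) auto
  have eiI: "integrable lborel (\<lambda>s. indicator I s * (norm (e k s))^2)" for k using ei by (simp add: I_def)
  have esI: "summable (\<lambda>k. 2^k * E k)" using es by (simp add: E_def I_def)
  define w where "w k s = 2^k * (indicator I s * (norm (e k s))^2)" for k s
  have w0: "w k s \<ge> 0" for k s by (simp add: w_def)
  have wint: "integrable lborel (w k)" for k unfolding w_def by (intro integrable_mult_right eiI)
  have wm[measurable]: "w k \<in> borel_measurable lborel" for k by (rule borel_measurable_integrable[OF wint])
  have wI: "\<integral>s. w k s \<partial>lborel = 2^k * E k" for k using eiI by (simp add: w_def E_def)
  have AEsum: "AE s in lborel. summable (\<lambda>k. w k s)"
  proof -
    have "(\<integral>\<^sup>+s. (\<Sum>k. ennreal (w k s)) \<partial>lborel) = (\<Sum>k. \<integral>\<^sup>+ s. ennreal (w k s) \<partial>lborel)"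
      by (rule nn_integral_suminf) measurable
    also have "\<dots> = (\<Sum>k. ennreal (2^k * E k))"
      using nn_integral_eq_integral[OF wint] w0 wI by simp
    also have "\<dots> \<noteq> top" using esI E0 by (intro ennreal_suminf_neq_top) auto
    finally have "(\<integral>\<^sup>+s. (\<Sum>k. ennreal (w k s)) \<partial>lborel) \<noteq> \<infinity>" by simp
    then have "AE s in lborel. (\<Sum>k. ennreal (w k s)) \<noteq> \<infinity>"
      by (intro nn_integral_PInf_AE) measurable
    then show ?thesis by eventually_elim (use w0 in \<open>auto intro: summable_suminf_not_top\<close>)
  qed
  define Gd where "Gd = {s. s \<in> I \<and> (\<Sum>k. ennreal (w k s)) \<noteq> top}"
  have Gd_iff: "s \<in> Gd \<longleftrightarrow> s \<in> I \<and> summable (\<lambda>k. w k s)" for s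
  proof
    assume "s \<in> Gd" then show "s \<in> I \<and> summable (\<lambda>k. w k s)"
      using summable_suminf_not_top[of "\<lambda>k. w k s"] w0 unfolding Gd_def by blast
  next
    assume a: "s \<in> I \<and> summable (\<lambda>k. w k s)"
    have "(\<Sum>k. ennreal (w k s)) \<noteq> top" using a w0 by (intro ennreal_suminf_neq_top) auto
    then show "s \<in> Gd" using a unfolding Gd_def by blast
  qed
  have Gdm[measurable]: "Gd \<in> sets lborel" unfolding Gd_def by measurable
  have GdI: "Gd \<subseteq> I" by (auto simp: Gd_def)
  have AEin: "AE s in lborel. s \<in> I \<longrightarrow> s \<in> Gd" using AEsum by eventually_elim (simp add: Gd_iff)
  have nb: "norm (e k s) \<le> (c * (1/2)^k + w k s / c) / 2" if "s \<in> I" "c > 0" for k s c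
    using norm_e_bound[OF that(2), of "norm (e k s)" k] that by (simp add: w_def)
  have snorm: "summable (\<lambda>k. norm (e k s))" if "s \<in> Gd" for s
  proof (rule summable_comparison_test[where g="\<lambda>k. (1 * (1/2)^k + w k s / 1) / 2"])
    show "\<exists>N. \<forall>n\<ge>N. norm (norm (e n s)) \<le> (1 * (1/2)^n + w n s / 1) / 2"
      using nb[of s 1] that GdI by auto
    have "summable (\<lambda>k. (1/2::real)^k)" by (rule summable_geometric) simp
    moreover have "summable (\<lambda>k. w k s)" using that by (simp add: Gd_iff)
    ultimately show "summable (\<lambda>k. (1 * (1/2)^k + w k s / 1) / 2)"
      by (intro summable_divide summable_add) auto
  qed
  have se: "summable (\<lambda>k. e k s)" if "s \<in> Gd" for s by (rule summable_norm_cancel_c[OF snorm[OF that]])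
  define G where "G s = (if s \<in> Gd then (\<Sum>k. e k s) else 0)" for s
  define W where "W s = (\<Sum>k. w k s)" for s
  have Gbound: "(norm (G s))^2 \<le> 2 * W s" if "s \<in> Gd" for s
  proof (rule sq_bound_aux)
    show "0 \<le> norm (G s)" by simp
    have "summable (\<lambda>k. w k s)" using that Gd_iff by blast
    then show "0 \<le> W s" unfolding W_def using w0 by (intro suminf_nonneg) auto
    fix c :: real assume c: "c > 0"
    have sw: "summable (\<lambda>k. w k s)" using that by (simp add: Gd_iff)
    have sg: "summable (\<lambda>k. (1/2::real)^k)" by (rule summable_geometric) simp
    have sb: "summable (\<lambda>k. (c * (1/2)^k + w k s / c) / 2)"
      using sw sg by (intro summable_divide summable_add summable_mult) auto
    have "norm (G s) \<le> (\<Sum>k. norm (e k s))" using that by (simp add: G_def summable_norm_c[OF snorm[OF that]])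
    also have "\<dots> \<le> (\<Sum>k. (c * (1/2)^k + w k s / c) / 2)"
      by (intro suminf_le snorm that sb) (use nb that GdI c in auto)
    also have "\<dots> = (c * (\<Sum>k. (1/2::real)^k) + (\<Sum>k. w k s) / c) / 2"
    proof -
      have s1: "summable (\<lambda>k. c * (1/2::real)^k)" using sg by (rule summable_mult)
      have s2: "summable (\<lambda>k. w k s / c)" using sw by (rule summable_divide)
      have "(\<Sum>k. (c * (1/2)^k + w k s / c) / 2) = (\<Sum>k. c * (1/2)^k + w k s / c) / 2"
        by (rule suminf_divide[OF summable_add[OF s1 s2]])
      also have "(\<Sum>k. c * (1/2)^k + w k s / c) = (\<Sum>k. c * (1/2::real)^k) + (\<Sum>k. w k s / c)"
        by (rule suminf_add[OF s1 s2, symmetric])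
      also have "(\<Sum>k. c * (1/2::real)^k) = c * (\<Sum>k. (1/2::real)^k)" by (rule suminf_mult[OF sg])
      also have "(\<Sum>k. w k s / c) = (\<Sum>k. w k s) / c" by (rule suminf_divide[OF sw])
      finally show ?thesis .
    qed
    also have "\<dots> = c + W s / (2 * c)" by (simp add: suminf_geometric W_def)
    finally show "norm (G s) \<le> c + W s / (2 * c)" .
  qed
  have Wint: "integrable lborel W" unfolding W_def
  proof (rule integrable_suminf[OF wint])
    show "AE x in lborel. summable (\<lambda>i. norm (w i x))" using AEsum w0 by auto
    show "summable (\<lambda>i. \<integral>x. norm (w i x) \<partial>lborel)" using esI wI w0 by simp
  qed
  define ps where "ps k s = (\<Sum>j<k. e j s)" for k s
  have psc: "continuous_on I (ps k)" for k unfolding ps_def I_def by (intro continuous_on_sum ec)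
  define Gm where "Gm k s = (if s \<in> Gd then indicator I s *\<^sub>R ps k s else 0)" for k s
  have Gmm: "Gm k \<in> borel_measurable lborel" for k
  proof -
    have "(\<lambda>s. indicator I s *\<^sub>R ps k s) \<in> borel_measurable borel"
      by (rule borel_measurable_continuous_on_indicator[OF Isets(2) psc])
    then have "(\<lambda>s. indicator I s *\<^sub>R ps k s) \<in> borel_measurable lborel" by simp
    then show ?thesis unfolding Gm_def using Gdm by (intro measurable_If_set) auto
  qed
  have Gm_lim: "(\<lambda>k. Gm k s) \<longlonglongrightarrow> G s" for s
  proof (cases "s \<in> Gd")
    case True
    then have "s \<in> I" using GdI by auto
    then have "Gm k s = ps k s" for k using True by (simp add: Gm_def)
    then show ?thesis using summable_LIMSEQ[OF se[OF True]] True by (simp add: G_def ps_def)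
  qed (simp add: Gm_def G_def)
  have Gmeas: "G \<in> borel_measurable lborel"
    by (rule borel_measurable_LIMSEQ_metric[OF Gmm Gm_lim])
  have GzI: "indicator I s *\<^sub>R G s = G s" for s using GdI by (auto simp: G_def indicator_def)
  have L2G: "L2 T G"
    unfolding L2_def set_borel_measurable_def set_integrable_def I_def[symmetric]
  proof
    show "(\<lambda>s. indicator I s *\<^sub>R G s) \<in> borel_measurable lborel" using Gmeas by (simp add: GzI)
    show "integrable lborel (\<lambda>s. indicator I s *\<^sub>R (norm (G s))^2)"
    proof (rule Bochner_Integration.integrable_bound[OF integrable_mult_right[OF Wint, of 2]])
      show "(\<lambda>s. indicator I s *\<^sub>R (norm (G s))^2) \<in> borel_measurable lborel"
        using Gmeas by measurable
      show "AE s in lborel. norm (indicator I s *\<^sub>R (norm (G s))^2) \<le> norm (2 * W s)"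
        using AEin
      proof eventually_elim
        fix s assume h: "s \<in> I \<longrightarrow> s \<in> Gd"
        show "norm (indicator I s *\<^sub>R (norm (G s))^2) \<le> norm (2 * W s)"
        proof (cases "s \<in> Gd")
          case True
          then show ?thesis using Gbound[OF True] GdI by (auto simp: indicator_def)
        next
          case False
          then show ?thesis using h by (auto simp: indicator_def)
        qed
      qed
    qed
  qed
  have main: "summable (\<lambda>k. \<bar>L2_inner T g0 (e k)\<bar>) \<and> L2_inner T g0 G = (\<Sum>k. L2_inner T g0 (e k))"
    if g0: "L2 T g0" for g0
  proof -
    define f where "f k s = indicator I s * inner (g0 s) (e k s)" for k s
    define A where "A = L2_norm_sq T g0"
    have fint: "integrable lborel (f k)" for k
      unfolding f_def I_def by (rule L2_prod_int(1)[OF g0 ec ei, of 1]) simp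
    have fabs: "(\<integral>s. norm (f k s) \<partial>lborel) \<le> ((1/2)^k * A + 2^k * E k) / 2" for k
    proof -
      have "(\<integral>s. \<bar>f k s\<bar> \<partial>lborel) \<le> ((1/2)^k * A + E k / (1/2)^k) / 2"
        unfolding f_def I_def A_def E_def by (rule L2_prod_int(2)[OF g0 ec ei]) simp
      then show ?thesis by (simp add: power_one_over mult.commute)
    qed
    have sfabs: "summable (\<lambda>k. \<integral>s. norm (f k s) \<partial>lborel)"
    proof (rule summable_comparison_test[OF _ summable_divide[OF summable_add[OF summable_mult2[OF summable_geometric[of "1/2::real"]] esI]]])
      show "\<exists>N. \<forall>n\<ge>N. norm (\<integral>s. norm (f n s) \<partial>lborel) \<le> ((1/2)^n * A + 2^n * E n) / 2"
        using fabs by (auto simp: integral_nonneg_AE)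
    qed simp
    have AEf: "AE s in lborel. summable (\<lambda>k. norm (f k s))"
      using AEin
    proof eventually_elim
      fix s assume h: "s \<in> I \<longrightarrow> s \<in> Gd"
      show "summable (\<lambda>k. norm (f k s))"
      proof (cases "s \<in> I")
        case True
        then have "s \<in> Gd" using h by simp
        show ?thesis
        proof (rule summable_comparison_test[OF _ summable_mult[OF snorm[OF \<open>s \<in> Gd\<close>], of "norm (g0 s)"]])
          show "\<exists>N. \<forall>n\<ge>N. norm (norm (f n s)) \<le> norm (g0 s) * norm (e n s)"
            using Cauchy_Schwarz_ineq2 by (auto simp: f_def indicator_def)
        qed
      qed (simp add: f_def)
    qed
    have sumint: "integrable lborel (\<lambda>s. \<Sum>k. f k s)"
      by (rule integrable_suminf[OF fint AEf sfabs])
    have sumeq: "(\<integral>s. (\<Sum>k. f k s) \<partial>lborel) = (\<Sum>k. \<integral>s. f k s \<partial>lborel)"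
      by (rule integral_suminf[OF fint AEf sfabs])
    have L2e: "L2_inner T g0 (e k) = (\<integral>s. f k s \<partial>lborel)" for k
      by (simp add: L2_inner_eq f_def I_def)
    have s1: "summable (\<lambda>k. \<bar>L2_inner T g0 (e k)\<bar>)"
    proof (rule summable_comparison_test[OF _ sfabs])
      show "\<exists>N. \<forall>n\<ge>N. norm \<bar>L2_inner T g0 (e n)\<bar> \<le> (\<integral>s. norm (f n s) \<partial>lborel)"
        using integral_norm_bound by (auto simp: L2e)
    qed
    have innm: "(\<lambda>s. indicator I s * inner (g0 s) (G s)) \<in> borel_measurable lborel"
    proof (rule borel_measurable_LIMSEQ_real)
      fix k
      have "(\<lambda>s. indicator I s * inner (g0 s) (ps k s)) \<in> borel_measurable lborel"
        unfolding I_def by (rule meas_inner_L2[OF g0 psc[unfolded I_def]])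
      then show "(\<lambda>s. indicator Gd s * (indicator I s * inner (g0 s) (ps k s))) \<in> borel_measurable lborel"
        by measurable
    next
      fix s
      show "(\<lambda>k. indicator Gd s * (indicator I s * inner (g0 s) (ps k s))) \<longlonglongrightarrow> indicator I s * inner (g0 s) (G s)"
      proof (cases "s \<in> Gd")
        case True
        then have "s \<in> I" using GdI by auto
        have "(\<lambda>k. inner (g0 s) (ps k s)) \<longlonglongrightarrow> inner (g0 s) (G s)"
          using summable_LIMSEQ[OF se[OF True]] True by (intro tendsto_intros) (simp add: G_def ps_def)
        then show ?thesis using True \<open>s \<in> I\<close> by simp
      qed (simp add: G_def)
    qed
    have "L2_inner T g0 G = (\<integral>s. indicator I s * inner (g0 s) (G s) \<partial>lborel)"
      by (simp add: L2_inner_eq I_def)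
    also have "\<dots> = (\<integral>s. (\<Sum>k. f k s) \<partial>lborel)"
    proof (rule integral_cong_AE[OF innm borel_measurable_integrable[OF sumint]])
      show "AE s in lborel. indicator I s * inner (g0 s) (G s) = (\<Sum>k. f k s)"
        using AEin
      proof eventually_elim
        fix s assume h: "s \<in> I \<longrightarrow> s \<in> Gd"
        show "indicator I s * inner (g0 s) (G s) = (\<Sum>k. f k s)"
        proof (cases "s \<in> I")
          case True
          then have Gs: "s \<in> Gd" using h by simp
          have "inner (g0 s) (G s) = (\<Sum>k. inner (g0 s) (e k s))"
            using Gs by (simp add: G_def bounded_linear.suminf[OF bounded_linear_inner_right se[OF Gs]])
          then show ?thesis using True by (simp add: f_def)
        qed (simp add: f_def)
      qed
    qed
    also have "\<dots> = (\<Sum>k. L2_inner T g0 (e k))" using sumeq by (simp add: L2e)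
    finally show ?thesis using s1 by simp
  qed
  show ?thesis using L2G main by blast
qed

lemma gliding_hump:
  fixes b :: "nat \<Rightarrow> nat \<Rightarrow> real"
  assumes rows: "\<And>n. summable (\<lambda>k. \<bar>b n k\<bar>)"
  and sets: "\<And>P. bounded (range (\<lambda>n. \<Sum>k. (if k \<in> P then b n k else 0)))"
  shows "\<exists>M. \<forall>n k. \<bar>b n k\<bar> \<le> M"
proof (rule ccontr)
  assume nb: "\<not> ?thesis"
  have "\<exists>c. c \<ge> 0 \<and> (\<forall>n. \<bar>b n k\<bar> \<le> c)" for k
  proof -
    have "(\<Sum>j. (if j \<in> {k} then b n j else 0)) = b n k" for n
      using sums_single[of k "b n"] by (simp add: sums_iff)
    then obtain B where "\<forall>n. \<bar>b n k\<bar> \<le> B"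
      using sets[of "{k}"] by (auto simp: bounded_iff)
    then show ?thesis by (intro exI[of _ "max B 0"]) (simp add: le_max_iff_disj)
  qed
  then obtain c where c0: "\<And>k. c k \<ge> 0" and cb: "\<And>n k. \<bar>b n k\<bar> \<le> c k" by metis
  have beyond: "\<exists>n k. k \<ge> J \<and> \<bar>b n k\<bar> > M" for J M
  proof -
    obtain n k where nk: "\<bar>b n k\<bar> > max M 0 + (\<Sum>j<J. c j)" using nb by (meson not_le)
    have "k \<ge> J"
    proof (rule ccontr)
      assume "\<not> k \<ge> J"
      then have "c k \<le> (\<Sum>j<J. c j)"
        by (intro member_le_sum) (auto intro: c0)
      moreover have "max M 0 \<ge> 0" by simp
      ultimately show False using nk cb[of n k] by linarith
    qed
    moreover have "(\<Sum>j<J. c j) \<ge> 0" by (intro sum_nonneg c0)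
    moreover have "max M 0 \<ge> M" by simp
    ultimately show ?thesis using nk by (intro exI[of _ n] exI[of _ k]) auto
  qed
  define R where "R i q q' \<longleftrightarrow> snd q' > snd q \<and> (\<Sum>k. \<bar>b (fst q) (k + snd q')\<bar>) \<le> 1
     \<and> \<bar>b (fst q') (snd q')\<bar> > real i + 1 + (\<Sum>k\<le>snd q. c k)" for i :: nat and q q' :: "nat \<times> nat"
  have Rex: "\<exists>q'. R i q q'" for i q
  proof -
    obtain J where J: "\<forall>j\<ge>J. norm (\<Sum>k. \<bar>b (fst q) (k + j)\<bar>) < 1"
      using suminf_exist_split[OF _ rows[of "fst q"], of 1] by auto
    obtain n k where nk: "k \<ge> max J (Suc (snd q))" "\<bar>b n k\<bar> > real i + 1 + (\<Sum>k\<le>snd q. c k)"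
      using beyond by blast
    have "(\<Sum>j. \<bar>b (fst q) (j + k)\<bar>) \<le> 1" using J nk(1) by fastforce
    then show ?thesis using nk unfolding R_def by (intro exI[of _ "(n, k)"]) auto
  qed
  define st where "st = rec_nat (SOME q. R 0 (0, 0) q) (\<lambda>i q. SOME q'. R (Suc i) q q')"
  have st0: "R 0 (0, 0) (st 0)" unfolding st_def using Rex by (simp add: someI_ex)
  have stS: "R (Suc i) (st i) (st (Suc i))" for i unfolding st_def using Rex by (simp add: someI_ex)
  define N where "N i = fst (st i)" for i
  define J where "J i = snd (st i)" for i
  define Jp where "Jp i = (case i of 0 \<Rightarrow> 0 | Suc l \<Rightarrow> J l)" for i
  have Jmono: "strict_mono J"
    by (rule strict_monoI_Suc) (use stS in \<open>auto simp: R_def J_def\<close>)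
  have tail: "(\<Sum>k. \<bar>b (N i) (k + J (Suc i))\<bar>) \<le> 1" for i
    using stS[of i] by (auto simp: R_def N_def J_def)
  have diag: "\<bar>b (N i) (J i)\<bar> > real i + 1 + (\<Sum>k\<le>Jp i. c k)" for i
    using st0 stS by (cases i) (auto simp: R_def N_def J_def Jp_def)
  have JpJ: "Jp i < J i" for i
    using st0 stS[of "i - 1"] by (cases i) (auto simp: R_def J_def Jp_def)
  define P where "P = range J"
  define x where "x i k = (if k \<in> P then b (N i) k else 0)" for i k
  have xabs: "\<bar>x i k\<bar> \<le> \<bar>b (N i) k\<bar>" for i k by (simp add: x_def)
  have sabs: "summable (\<lambda>k. \<bar>x i k\<bar>)" for i
    by (rule summable_comparison_test[OF _ rows[of "N i"]]) (use xabs in auto)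
  have sx: "summable (x i)" for i using sabs by (rule summable_rabs_cancel)
  have big: "\<bar>\<Sum>k. x i k\<bar> > real i" for i
  proof -
    have split: "(\<Sum>k. x i k) = (\<Sum>k. x i (k + J (Suc i))) + (\<Sum>k<J (Suc i). x i k)"
      by (rule suminf_split_initial_segment[OF sx])
    have "(\<Sum>k<J (Suc i). x i k) = (\<Sum>k<J i. x i k) + (\<Sum>k\<in>{J i..<J (Suc i)}. x i k)"
      using Jmono by (intro sum.atLeastLessThan_concat[of 0, simplified lessThan_atLeast0[symmetric], symmetric])
         (auto simp: strict_mono_less_eq)
    also have "(\<Sum>k\<in>{J i..<J (Suc i)}. x i k) = (\<Sum>k\<in>{J i}. x i k)"
    proof (rule sum.mono_neutral_right)
      show "{J i} \<subseteq> {J i..<J (Suc i)}" using Jmono by (auto simp: strict_mono_def)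
      show "\<forall>k\<in>{J i..<J (Suc i)} - {J i}. x i k = 0"
      proof
        fix k assume k: "k \<in> {J i..<J (Suc i)} - {J i}"
        have "k \<notin> P"
        proof
          assume "k \<in> P"
          then obtain l where l: "k = J l" by (auto simp: P_def)
          have "J i < J l" "J l < J (Suc i)" using k l by auto
          then have "i < l" "l < Suc i" using Jmono by (auto simp: strict_mono_less)
          then show False by simp
        qed
        then show "x i k = 0" by (simp add: x_def)
      qed
    qed simp
    finally have fin: "(\<Sum>k<J (Suc i). x i k) = (\<Sum>k<J i. x i k) + b (N i) (J i)"
      by (simp add: x_def P_def)
    have head: "\<bar>\<Sum>k<J i. x i k\<bar> \<le> (\<Sum>k\<le>Jp i. c k)"
    proof -
      have "\<bar>\<Sum>k<J i. x i k\<bar> \<le> (\<Sum>k<J i. \<bar>x i k\<bar>)" by (rule sum_abs)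
      also have "\<dots> \<le> (\<Sum>k<J i. (if k \<le> Jp i then c k else 0))"
      proof (rule sum_mono)
        fix k assume k: "k \<in> {..<J i}"
        show "\<bar>x i k\<bar> \<le> (if k \<le> Jp i then c k else 0)"
        proof (cases "k \<in> P")
          case True
          then obtain l where l: "k = J l" by (auto simp: P_def)
          then have "l < i" using k Jmono by (auto simp: strict_mono_less)
          then have "k \<le> Jp i" using l Jmono by (cases i) (auto simp: Jp_def strict_mono_less_eq)
          then show ?thesis using cb c0 by (simp add: x_def)
        qed (simp add: x_def c0)
      qed
      also have "\<dots> = (\<Sum>k\<in>{k\<in>{..<J i}. k \<le> Jp i}. c k)"
        by (rule sum.inter_filter[symmetric]) simp
      also have "\<dots> = (\<Sum>k\<in>{..<J i} \<inter> {..Jp i}. c k)"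
        by (rule sum.cong) auto
      also have "\<dots> \<le> (\<Sum>k\<le>Jp i. c k)" by (intro sum_mono2) (auto intro: c0)
      finally show ?thesis .
    qed
    have tl: "\<bar>\<Sum>k. x i (k + J (Suc i))\<bar> \<le> 1"
    proof -
      have s1: "summable (\<lambda>k. \<bar>x i (k + J (Suc i))\<bar>)"
        using summable_ignore_initial_segment[OF sabs] by blast
      have "\<bar>\<Sum>k. x i (k + J (Suc i))\<bar> \<le> (\<Sum>k. \<bar>x i (k + J (Suc i))\<bar>)" by (rule summable_rabs[OF s1])
      also have "\<dots> \<le> (\<Sum>k. \<bar>b (N i) (k + J (Suc i))\<bar>)"
        by (intro suminf_le s1 summable_ignore_initial_segment[OF rows] xabs)
      also have "\<dots> \<le> 1" by (rule tail)
      finally show ?thesis .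
    qed
    show ?thesis using split fin head tl diag[of i] by linarith
  qed
  obtain Bd where Bd: "\<forall>n. \<bar>\<Sum>k. (if k \<in> P then b n k else 0)\<bar> \<le> Bd"
    using sets[of P] by (auto simp: bounded_iff)
  obtain i :: nat where "Bd \<le> real i" using real_arch_simple by blast
  with Bd[rule_format, of "N i"] big[of i] show False by (simp add: x_def)
qed

lemma L2_inner_scale: "L2_inner T f (\<lambda>s. c *\<^sub>R g s) = c * L2_inner T f g"
  by (simp add: L2_inner_eq mult.left_commute)

lemma L2_inner_zero: "L2_inner T f (\<lambda>s. 0) = 0"
  by (simp add: L2_inner_eq)

lemma key_weak:
  fixes fs :: "nat \<Rightarrow> real \<Rightarrow> 'u::{real_inner,complete_space}" and d :: "nat \<Rightarrow> real \<Rightarrow> 'u"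
  assumes fL2: "\<And>n. L2 T (fs n)" and weak: "\<And>g. L2 T g \<Longrightarrow> convergent (\<lambda>n. L2_inner T (fs n) g)"
  and dc: "\<And>n. continuous_on {0<..<T} (d n)"
  and di: "\<And>n. integrable lborel (\<lambda>s. indicator {0<..<T} s * (norm (d n s))^2)"
  and dlim: "(\<lambda>n. \<integral>s. indicator {0<..<T} s * (norm (d n s))^2 \<partial>lborel) \<longlonglongrightarrow> 0"
  shows "(\<lambda>n. L2_inner T (fs n) (d n)) \<longlonglongrightarrow> 0"
proof (rule ccontr)
  assume nc: "\<not> ?thesis"
  define D where "D n = (\<integral>s. indicator {0<..<T} s * (norm (d n s))^2 \<partial>lborel)" for n
  define X where "X n = L2_inner T (fs n) (d n)" for n
  obtain \<delta> where \<delta>: "\<delta> > 0" "\<And>N. \<exists>n\<ge>N. \<bar>X n\<bar> \<ge> \<delta>"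
    using nc unfolding LIMSEQ_def X_def dist_real_def by (auto simp: not_less)
  have Dsmall: "\<exists>N. \<forall>n\<ge>N. D n < \<epsilon>" if "\<epsilon> > 0" for \<epsilon>
    using dlim that unfolding LIMSEQ_def D_def dist_real_def by (metis abs_less_iff diff_zero)
  have "\<exists>n. \<bar>X n\<bar> \<ge> \<delta> \<and> D n \<le> (1/16)^k" for k
  proof -
    obtain N where N: "\<forall>n\<ge>N. D n < (1/16)^k" using Dsmall[of "(1/16)^k"] by auto
    obtain n where "n \<ge> N" "\<bar>X n\<bar> \<ge> \<delta>" using \<delta>(2) by blast
    then show ?thesis using N by (auto intro!: exI[of _ n] less_imp_le)
  qed
  then obtain m where m: "\<And>k. \<bar>X (m k)\<bar> \<ge> \<delta>" "\<And>k. D (m k) \<le> (1/16)^k" by metis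
  define e where "e k s = (2::real)^k *\<^sub>R d (m k) s" for k s
  have ec: "continuous_on {0<..<T} (e k)" for k unfolding e_def by (intro continuous_intros dc)
  have enorm: "indicator {0<..<T} s * (norm (e k s))^2 = (2^k)^2 * (indicator {0<..<T} s * (norm (d (m k) s))^2)" for k s
    by (simp add: e_def power_mult_distrib)
  have ei: "integrable lborel (\<lambda>s. indicator {0<..<T} s * (norm (e k s))^2)" for k
    unfolding enorm by (intro integrable_mult_right di)
  have eI: "(\<integral>s. indicator {0<..<T} s * (norm (e k s))^2 \<partial>lborel) = (2^k)^2 * D (m k)" for k
    unfolding enorm D_def by simp
  have D0: "D n \<ge> 0" for n unfolding D_def by (intro integral_nonneg_AE) auto
  have ebd: "2^k * (\<integral>s. indicator {0<..<T} s * (norm (e k s))^2 \<partial>lborel) \<le> (1/2)^k" for k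
  proof -
    have "2^k * (\<integral>s. indicator {0<..<T} s * (norm (e k s))^2 \<partial>lborel) = (2::real)^k * (2^k)^2 * D (m k)"
      by (simp add: eI)
    also have "\<dots> \<le> (2::real)^k * (2^k)^2 * (1/16)^k" using m(2)[of k] by (intro mult_left_mono) auto
    also have "\<dots> = (1/2)^k" by (simp add: power2_eq_square power_mult_distrib[symmetric])
    finally show ?thesis .
  qed
  define b where "b n k = L2_inner T (fs n) (e k)" for n k
  have rows: "summable (\<lambda>k. \<bar>b n k\<bar>)" for n
  proof -
    have es: "summable (\<lambda>k. 2^k * (\<integral>s. indicator {0<..<T} s * (norm (e k s))^2 \<partial>lborel))"
      by (rule summable_comparison_test[OF _ summable_geometric[of "1/2::real"]])
        (use ebd in \<open>auto intro!: exI[of _ 0] integral_nonneg_AE\<close>)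
    from series_L2[OF ec ei es] fL2[of n] show ?thesis by (auto simp: b_def)
  qed
  have sets: "bounded (range (\<lambda>n. \<Sum>k. (if k \<in> P then b n k else 0)))" for P
  proof -
    define e' where "e' k = (if k \<in> P then e k else (\<lambda>s. 0))" for k
    have ec': "continuous_on {0<..<T} (e' k)" for k using ec by (simp add: e'_def)
    have ei': "integrable lborel (\<lambda>s. indicator {0<..<T} s * (norm (e' k s))^2)" for k
      using ei by (simp add: e'_def)
    have es': "summable (\<lambda>k. 2^k * (\<integral>s. indicator {0<..<T} s * (norm (e' k s))^2 \<partial>lborel))"
      by (rule summable_comparison_test[OF _ summable_geometric[of "1/2::real"]])
        (use ebd in \<open>auto intro!: exI[of _ 0] integral_nonneg_AE simp: e'_def\<close>)
    obtain G where G: "L2 T G" "\<And>g0. L2 T g0 \<Longrightarrow> L2_inner T g0 G = (\<Sum>k. L2_inner T g0 (e' k))"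
      using series_L2[OF ec' ei' es'] by blast
    have z: "L2_inner T (fs n) (\<lambda>s. 0) = 0" for n by (rule L2_inner_zero)
    have "L2_inner T (fs n) (e' k) = (if k \<in> P then b n k else 0)" for n k
      by (cases "k \<in> P") (simp_all add: b_def e'_def z)
    then have "(\<lambda>n. \<Sum>k. (if k \<in> P then b n k else 0)) = (\<lambda>n. L2_inner T (fs n) G)"
      using G(2)[OF fL2] by simp
    moreover have "convergent (\<lambda>n. L2_inner T (fs n) G)" by (rule weak[OF G(1)])
    ultimately show ?thesis by (metis Bseq_eq_bounded convergent_imp_Bseq)
  qed
  obtain M where M: "\<And>n k. \<bar>b n k\<bar> \<le> M" using gliding_hump[OF rows sets] by blast
  have diag: "\<bar>b (m k) k\<bar> \<ge> 2^k * \<delta>" for k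
  proof -
    have "e k = (\<lambda>s. (2::real)^k *\<^sub>R d (m k) s)" by (rule ext) (simp add: e_def)
    then have "b (m k) k = 2^k * X (m k)" by (simp add: b_def X_def L2_inner_scale)
    then show ?thesis using m(1)[of k] by (simp add: abs_mult mult_left_mono)
  qed
  obtain k :: nat where k: "M / \<delta> < real k" using reals_Archimedean2 by blast
  have "real k < 2^k" by (rule of_nat_less_two_power)
  then have "\<delta> * real k < \<delta> * 2^k" using \<delta>(1) by (intro mult_strict_left_mono) auto
  moreover have "M < \<delta> * real k" using k \<delta>(1) by (simp add: field_simps)
  ultimately have "M < 2^k * \<delta>" by (simp add: mult.commute)
  then show False using diag[of k] M[of "m k" k] by linarith
qed

lemma riesz_aux_neg0:
  fixes c nk m :: real
  assumes "m > 0" "nk < 2 * m" "c \<noteq> 0"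
  shows "(c / m)^2 * nk - 2 * (c / m) * c < 0"
proof -
  have "(c / m)^2 * nk - 2 * (c / m) * c = c^2 * (nk - 2 * m) / m^2"
    using assms(1) by (simp add: field_simps power2_eq_square)
  also have "\<dots> < 0" using assms
    by (intro divide_neg_pos) (auto intro!: mult_pos_neg)
  finally show ?thesis .
qed

lemma riesz_aux_neg:
  fixes c nk :: real
  assumes "nk \<ge> 0" "c \<noteq> 0"
  shows "(c / (nk + 1))^2 * nk - 2 * (c / (nk + 1)) * c < 0"
  using riesz_aux_neg0[of "nk+1" nk c] assms by simp

lemma riesz:
  fixes \<phi> :: "'a::{real_inner,complete_space} \<Rightarrow> real"
  assumes bl: "bounded_linear \<phi>"
  shows "\<exists>w. \<forall>x. \<phi> x = inner x w"
proof (cases "\<forall>x. \<phi> x = 0")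
  case True then show ?thesis by (intro exI[of _ 0]) simp
next
  case False
  interpret bounded_linear \<phi> by fact
  obtain x1 where x1: "\<phi> x1 \<noteq> 0" using False by auto
  define x0 where "x0 = x1 /\<^sub>R \<phi> x1"
  have phx0: "\<phi> x0 = 1" using x1 by (simp add: x0_def scale)
  define K where "K = {x. \<phi> x = 0}"
  have closedK: "closed K" unfolding K_def
    by (intro closed_Collect_eq continuous_on_const) (simp add: continuous_on linear_continuous_on bl)
  have K0: "0 \<in> K" by (simp add: K_def)
  have Kadd: "a + b \<in> K" if "a \<in> K" "b \<in> K" for a b using that by (simp add: K_def add)
  have Kscale: "c *\<^sub>R a \<in> K" if "a \<in> K" for a c using that by (simp add: K_def scale)
  define D2 where "D2 = (INF k\<in>K. (norm (x0 - k))^2)"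
  have bdd: "bdd_below ((\<lambda>k. (norm (x0 - k))^2) ` K)" by (auto intro: bdd_belowI[of _ 0])
  have D2le: "D2 \<le> (norm (x0 - k))^2" if "k \<in> K" for k
    unfolding D2_def using bdd that by (rule cINF_lower)
  have "\<exists>k\<in>K. (norm (x0 - k))^2 < D2 + 1 / Suc n" for n
  proof -
    have "D2 < D2 + 1 / Suc n" by simp
    then show ?thesis unfolding D2_def using K0
      by (subst (asm) cINF_less_iff[OF _ bdd]) auto
  qed
  then obtain ks where ksK: "\<And>n. ks n \<in> K" and ksb: "\<And>n. (norm (x0 - ks n))^2 < D2 + 1 / Suc n"
    by metis
  have para: "(norm (ks m - ks n))^2 \<le> 2 / Suc n + 2 / Suc m" for m n
  proof -
    define a where "a = x0 - ks n"
    define b where "b = x0 - ks m"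
    have "(norm (a - b))^2 + (norm (a + b))^2 = 2 * (norm a)^2 + 2 * (norm b)^2"
      by (simp add: power2_norm_eq_inner inner_add_left inner_add_right inner_diff_left inner_diff_right inner_commute)
    moreover have "a + b = 2 *\<^sub>R (x0 - ((1/2) *\<^sub>R (ks n + ks m)))"
      by (simp add: a_def b_def algebra_simps scaleR_2)
    then have "(norm (a + b))^2 = 4 * (norm (x0 - ((1/2) *\<^sub>R (ks n + ks m))))^2"
      by (simp add: power2_eq_square)
    moreover have "D2 \<le> (norm (x0 - ((1/2) *\<^sub>R (ks n + ks m))))^2"
      by (intro D2le Kscale Kadd ksK)
    moreover have "(norm (ks m - ks n))^2 = (norm (a - b))^2" by (simp add: a_def b_def)
    ultimately show ?thesis using ksb[of n] ksb[of m] unfolding a_def[symmetric] b_def[symmetric]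
      by linarith
  qed
  have "Cauchy ks"
  proof (rule CauchyI)
    fix e :: real assume e: "0 < e"
    obtain M where M: "4 / Suc M < e^2"
    proof -
      obtain M where "inverse (real (Suc M)) < e^2 / 4"
        using reals_Archimedean e by (metis zero_less_power divide_pos_pos zero_less_numeral)
      then show ?thesis using that[of M] by (simp add: field_simps)
    qed
    show "\<exists>M. \<forall>m\<ge>M. \<forall>n\<ge>M. norm (ks m - ks n) < e"
    proof (intro exI allI impI)
      fix m n assume mn: "M \<le> m" "M \<le> n"
      have "2 / Suc n \<le> 2 / Suc M" "2 / Suc m \<le> 2 / Suc M" using mn by (auto simp: frac_le)
      then have "(norm (ks m - ks n))^2 < e^2" using para[of m n] M by linarith
      then show "norm (ks m - ks n) < e" using e by (simp add: power_less_imp_less_base)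
    qed
  qed
  then obtain p where p: "ks \<longlonglongrightarrow> p" using Cauchy_convergent_iff convergent_def by blast
  have pK: "p \<in> K" using closed_sequentially[OF closedK] ksK p by blast
  have "(norm (x0 - p))^2 \<le> D2"
  proof (rule LIMSEQ_le)
    show "(\<lambda>n. (norm (x0 - ks n))^2) \<longlonglongrightarrow> (norm (x0 - p))^2"
      by (intro tendsto_intros p)
    show "(\<lambda>n. D2 + 1 / Suc n) \<longlonglongrightarrow> D2"
      using tendsto_add[OF tendsto_const LIMSEQ_inverse_real_of_nat] by (simp add: inverse_eq_divide)
    show "\<exists>N. \<forall>n\<ge>N. (norm (x0 - ks n))^2 \<le> D2 + 1 / Suc n" using ksb less_imp_le by blast
  qed
  define z where "z = x0 - p"
  have zmin: "(norm z)^2 \<le> (norm (z - k))^2" if "k \<in> K" for k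
  proof -
    have "p + k \<in> K" using pK that Kadd by blast
    from D2le[OF this] \<open>(norm (x0 - p))^2 \<le> D2\<close> have "(norm (x0 - p))^2 \<le> (norm (x0 - (p + k)))^2" by linarith
    then show ?thesis by (simp add: z_def algebra_simps)
  qed
  have zorth: "inner z k = 0" if k: "k \<in> K" for k
  proof (rule ccontr)
    assume c: "inner z k \<noteq> 0"
    define t where "t = inner z k / ((norm k)^2 + 1)"
    have "(norm z)^2 \<le> (norm (z - t *\<^sub>R k))^2" using zmin Kscale k by blast
    also have "\<dots> = (norm z)^2 + (t^2 * (norm k)^2 - 2 * t * inner z k)"
      by (simp only: power2_norm_eq_inner) (simp add: inner_diff_left inner_diff_right inner_commute power2_eq_square algebra_simps)
    finally have "0 \<le> t^2 * (norm k)^2 - 2 * t * inner z k" by simp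
    moreover have "t^2 * (norm k)^2 - 2 * t * inner z k < 0"
      unfolding t_def by (rule riesz_aux_neg) (use c in auto)
    ultimately show False by simp
  qed
  have phz: "\<phi> z = 1" using pK phx0 by (simp add: z_def diff K_def)
  then have zne: "z \<noteq> 0" by auto
  have "\<phi> x = inner x z / (norm z)^2" for x
  proof -
    have "x - \<phi> x *\<^sub>R z \<in> K" by (simp add: K_def diff scale phz)
    then have "inner z (x - \<phi> x *\<^sub>R z) = 0" by (rule zorth)
    then have "inner x z = \<phi> x * (norm z)^2"
      by (simp add: inner_diff_right inner_commute power2_norm_eq_inner)
    then show ?thesis using zne by simp
  qed
  then show ?thesis by (intro exI[of _ "z /\<^sub>R (norm z)^2"]) (simp add: divide_inverse mult.commute)
qed

lemma adjoint_works_hilbert: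
  fixes B :: "'u::{real_inner,complete_space} \<Rightarrow> 'h::real_inner"
  assumes "bounded_linear B"
  shows "inner (B x) y = inner x (adjoint B y)"
proof -
  interpret bounded_linear B by fact
  have "\<forall>y. \<exists>w. \<forall>x. inner (B x) y = inner x w"
  proof
    fix y
    have "bounded_linear (\<lambda>x. inner (B x) y)"
      by (rule bounded_linear_compose[OF bounded_linear_inner_left assms])
    then show "\<exists>w. \<forall>x. inner (B x) y = inner x w" by (rule riesz)
  qed
  then obtain g where "\<forall>y x. inner (B x) y = inner x (g y)" by metis
  then have "\<exists>f'. \<forall>x y. inner (B x) y = inner x (f' y)" by blast
  then have "\<forall>x y. inner (B x) y = inner x (adjoint B y)"
    unfolding adjoint_def by (rule someI_ex)
  then show ?thesis by blast
qed

lemma adjoint_bounded_linear_hilbert: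
  fixes B :: "'u::{real_inner,complete_space} \<Rightarrow> 'h::real_inner"
  assumes "bounded_linear B"
  shows "bounded_linear (adjoint B)"
proof -
  interpret bounded_linear B by fact
  note aw = adjoint_works_hilbert[OF assms]
  have add: "adjoint B (a + b) = adjoint B a + adjoint B b" for a b
  proof -
    have "inner x (adjoint B (a + b) - (adjoint B a + adjoint B b)) = 0" for x
      by (simp add: inner_diff_right inner_add_right flip: aw)
    from this[of "adjoint B (a + b) - (adjoint B a + adjoint B b)"] show ?thesis by simp
  qed
  have sc: "adjoint B (c *\<^sub>R a) = c *\<^sub>R adjoint B a" for a c
  proof -
    have "inner x (adjoint B (c *\<^sub>R a) - c *\<^sub>R adjoint B a) = 0" for x
      by (simp add: inner_diff_right flip: aw)
    from this[of "adjoint B (c *\<^sub>R a) - c *\<^sub>R adjoint B a"] show ?thesis by simp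
  qed
  obtain K where K: "\<And>x. norm (B x) \<le> norm x * K" "K > 0" using pos_bounded by blast
  have "norm (adjoint B y) \<le> norm y * K" for y
  proof (cases "adjoint B y = 0")
    case True then show ?thesis using K by simp
  next
    case False
    have "(norm (adjoint B y))^2 = inner (B (adjoint B y)) y"
      by (simp add: aw power2_norm_eq_inner)
    also have "\<dots> \<le> norm (B (adjoint B y)) * norm y" by (rule Cauchy_Schwarz_ineq2[THEN order_trans[OF abs_ge_self]])
    also have "\<dots> \<le> norm (adjoint B y) * K * norm y" using K by (simp add: mult_right_mono)
    finally have "norm (adjoint B y) * norm (adjoint B y) \<le> norm (adjoint B y) * (norm y * K)"
      by (simp add: power2_eq_square mult_ac)
    then show ?thesis using False by simp
  qed
  then show ?thesis
    by (intro bounded_linear_intro[where K=K]) (auto simp: add sc)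
qed

lemma ubp:
  fixes A :: "nat \<Rightarrow> 'a::{real_normed_vector, complete_space} \<Rightarrow> 'b::real_normed_vector"
  assumes bl: "\<And>n. bounded_linear (A n)" and pb: "\<And>x. bounded (range (\<lambda>n. A n x))"
  shows "\<exists>C. \<forall>n x. norm (A n x) \<le> C * norm x"
proof -
  define E where "E m = {x. \<forall>n. norm (A n x) \<le> real m}" for m :: nat
  have closedE: "closed (E m)" for m
  proof -
    have "E m = (\<Inter>n. {x. norm (A n x) \<le> real m})" by (auto simp: E_def)
    moreover have "closed {x. norm (A n x) \<le> real m}" for n
      by (intro closed_Collect_le continuous_on_norm continuous_on_const linear_continuous_on bl)
    ultimately show ?thesis by auto
  qed
  have cover: "(\<Union>m. E m) = UNIV"
  proof -
    have "\<exists>m. x \<in> E m" for x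
    proof -
      obtain M where "\<forall>n. norm (A n x) \<le> M" using pb[of x] by (auto simp: bounded_iff)
      moreover obtain m :: nat where "M \<le> real m" using real_arch_simple by blast
      ultimately show ?thesis by (auto simp: E_def intro: order_trans)
    qed
    then show ?thesis by auto
  qed
  have "\<exists>m. interior (E m) \<noteq> {}"
  proof (rule ccontr)
    assume "\<not> ?thesis"
    then have "euclidean interior_of \<Union>(range E) = {}"
      by (intro Baire_category_alt) (auto simp: completely_metrizable_space_euclidean closedE euclidean_interior_of)
    then show False using cover by (simp add: euclidean_interior_of)
  qed
  then obtain m x0 where "x0 \<in> interior (E m)" by blast
  then obtain r where r: "r > 0" "ball x0 r \<subseteq> E m" using mem_interior by blast
  have x0E: "x0 \<in> E m" using r by auto
  have "norm (A n x) \<le> (4 * real m / r) * norm x" for n x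
  proof (cases "x = 0")
    case True then show ?thesis using bl[of n] by (simp add: linear_simps)
  next
    case False
    interpret bounded_linear "A n" by (rule bl)
    define z where "z = (r / 2 / norm x) *\<^sub>R x"
    have nz: "norm z = r / 2" using False r by (simp add: z_def)
    then have "x0 + z \<in> E m" using r by (intro subsetD[OF r(2)]) (auto simp: dist_norm)
    then have "norm (A n (x0 + z)) \<le> real m" by (auto simp: E_def)
    moreover have "norm (A n x0) \<le> real m" using x0E by (auto simp: E_def)
    moreover have "norm (A n z) \<le> norm (A n (x0 + z)) + norm (A n x0)"
      using norm_triangle_ineq4[of "A n (x0 + z)" "A n x0"] by (simp add: add)
    ultimately have Az: "norm (A n z) \<le> 2 * real m" by linarith
    have "x = (2 * norm x / r) *\<^sub>R z" using False r by (simp add: z_def)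
    then have "A n x = (2 * norm x / r) *\<^sub>R A n z" by (metis scale)
    then have "norm (A n x) = (2 * norm x / r) * norm (A n z)" using r by simp
    also have "\<dots> \<le> (2 * norm x / r) * (2 * real m)" using Az r by (intro mult_left_mono) auto
    also have "\<dots> = (4 * real m / r) * norm x" by (simp add: field_simps)
    finally show ?thesis .
  qed
  then show ?thesis by blast
qed

lemma sg_cont:
  assumes "selfadj_semigroup a S" "bounded_linear L"
  shows "continuous_on {0<..<T} (\<lambda>s. L (S (T - s) y))"
proof -
  have c1: "continuous_on {0..} (\<lambda>t. S t y)" using assms(1) by (simp add: selfadj_semigroup_def)
  have c2: "continuous_on {0<..<T} (\<lambda>s. T - s)" by (intro continuous_intros)
  have "(\<lambda>s. T - s) ` {0<..<T} \<subseteq> {0..}" by auto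
  from continuous_on_compose2[OF c1 c2 this] have "continuous_on {0<..<T} (\<lambda>s. S (T - s) y)" .
  then show ?thesis by (rule bounded_linear.continuous_on[OF assms(2)])
qed

lemma sg_bound:
  assumes "selfadj_semigroup a S" "s \<in> {0<..<T}"
  shows "norm (S (T - s) y) \<le> exp (\<bar>a\<bar> * T) * norm y"
proof -
  have "norm (S (T - s) y) \<le> exp (- a * (T - s)) * norm y"
    using assms by (auto simp: selfadj_semigroup_def)
  also have "\<dots> \<le> exp (\<bar>a\<bar> * T) * norm y"
  proof (intro mult_right_mono norm_ge_zero)
    have "- a * (T - s) \<le> \<bar>a\<bar> * (T - s)" using assms(2) by (intro mult_right_mono) auto
    also have "\<dots> \<le> \<bar>a\<bar> * T" using assms(2) by (intro mult_left_mono) auto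
    finally show "exp (- a * (T - s)) \<le> exp (\<bar>a\<bar> * T)" by simp
  qed
  finally show ?thesis .
qed

lemma bdd_int:
  fixes p :: "real \<Rightarrow> 'u::real_normed_vector"
  assumes pc: "continuous_on {0<..<T} p" and pb: "\<And>s. s \<in> {0<..<T} \<Longrightarrow> norm (p s) \<le> K"
  shows "integrable lborel (\<lambda>s. indicator {0<..<T} s * (norm (p s))^2)"
    and "L2 T p"
proof -
  define I where "I = {0<..<T::real}"
  have m1: "(\<lambda>s. indicator I s *\<^sub>R p s) \<in> borel_measurable lborel"
    using borel_measurable_continuous_on_indicator[of I p] pc by (simp add: I_def)
  have eq: "indicator I s * (norm (p s))^2 = (norm (indicator I s *\<^sub>R p s))^2" for s
    by (cases "s \<in> I") simp_all
  have m2: "(\<lambda>s. indicator I s * (norm (p s))^2) \<in> borel_measurable lborel"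
    unfolding eq using m1 by measurable
  have wi: "integrable lborel (\<lambda>s. indicator I s * K^2)"
  proof (intro integrable_mult_left integrable_real_indicator)
    show "I \<in> sets lborel" by (simp add: I_def)
    show "emeasure lborel I < \<infinity>"
      by (cases "0 \<le> T") (auto simp: I_def emeasure_lborel_Ioo)
  qed
  show i: "integrable lborel (\<lambda>s. indicator {0<..<T} s * (norm (p s))^2)"
    unfolding I_def[symmetric]
  proof (rule Bochner_Integration.integrable_bound[OF wi m2], rule AE_I2)
    fix s
    show "norm (indicator I s * (norm (p s))^2) \<le> norm (indicator I s * K^2)"
    proof (cases "s \<in> I")
      case True
      then have "norm (p s) \<le> K" using pb by (simp add: I_def)
      then have "(norm (p s))^2 \<le> K^2" by (intro power_mono) auto
      then show ?thesis using True by simp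
    qed simp
  qed
  show "L2 T p" unfolding L2_def set_borel_measurable_def set_integrable_def
    using m1 i by (simp add: I_def)
qed

theorem corollary4p8:
  fixes a T :: real
    and S :: "real \<Rightarrow> 'h::{real_inner,complete_space} \<Rightarrow> 'h"
    and Sn :: "nat \<Rightarrow> real \<Rightarrow> 'h \<Rightarrow> 'h"
    and B :: "'u::{real_inner,complete_space} \<Rightarrow> 'h" 
    and Bn :: "nat \<Rightarrow> 'u \<Rightarrow> 'h"
    and F :: "'h \<Rightarrow> real \<Rightarrow> 'u"
    and Fn :: "nat \<Rightarrow> 'h \<Rightarrow> real \<Rightarrow> 'u"
  assumes "selfadj_semigroup a S"
    and "\<And>n. selfadj_semigroup a (Sn n)"
    and "\<And>t x. t > 0 \<Longrightarrow> (\<lambda>n. Sn n t x) \<longlonglongrightarrow> S t x"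
    and "bounded_linear B" and "\<And>n. bounded_linear (Bn n)"
    and "\<And>x. (\<lambda>n. Bn n x) \<longlonglongrightarrow> B x"
    and "\<And>x. (\<lambda>n. adjoint (Bn n) x) \<longlonglongrightarrow> adjoint B x"
    and "T > 0"
    and "\<And>n. bounded_linear_L2 T (Fn n)"
    and "\<And>n. feedback_operator (Sn n) (Bn n) T (Fn n)"
    and "\<And>u0. L2 T (F u0)"
    and "\<And>u0. L2_weak_conv T (\<lambda>n. Fn n u0) (F u0)"
  shows "feedback_operator S B T F"
proof -
  note sgS = assms(1) and sgSn = assms(2) and Slim = assms(3) and blB = assms(4) and blBn = assms(5)
    and Alim = assms(7) and Tpos = assms(8) and blF = assms(9) and fb = assms(10) and FL2 = assms(11)
    and wk = assms(12)
  define I where "I = {0<..<T}"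
  have Isets: "I \<in> sets lborel" by (simp add: I_def)
  define A where "A n = adjoint (Bn n)" for n
  define A0 where "A0 = adjoint B"
  have blA: "bounded_linear (A n)" for n unfolding A_def by (rule adjoint_bounded_linear_hilbert[OF blBn])
  have blA0: "bounded_linear A0" unfolding A0_def by (rule adjoint_bounded_linear_hilbert[OF blB])
  have adjA: "inner (Bn n x) z = inner x (A n z)" for n x z unfolding A_def by (rule adjoint_works_hilbert[OF blBn])
  have adjA0: "inner (B x) z = inner x (A0 z)" for x z unfolding A0_def by (rule adjoint_works_hilbert[OF blB])
  have AlimA: "(\<lambda>n. A n x) \<longlonglongrightarrow> A0 x" for x unfolding A_def A0_def by (rule Alim)
  obtain C0 where C0: "\<And>n x. norm (A n x) \<le> C0 * norm x"
  proof -
    have "bounded (range (\<lambda>n. A n x))" for x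
      using AlimA[of x] by (metis Bseq_eq_bounded convergent_imp_Bseq convergentI)
    from ubp[OF blA this] show ?thesis using that by blast
  qed
  define C where "C = max C0 0"
  have C: "norm (A n x) \<le> C * norm x" "C \<ge> 0" for n x
  proof -
    have "C0 * norm x \<le> C * norm x" by (intro mult_right_mono) (auto simp: C_def)
    then show "norm (A n x) \<le> C * norm x" using C0[of n x] by linarith
    show "C \<ge> 0" by (simp add: C_def)
  qed
  obtain CA where CA: "\<And>x. norm (A0 x) \<le> norm x * CA" "CA > 0"
    using bounded_linear.pos_bounded[OF blA0] by blast
  show ?thesis unfolding feedback_operator_def null_control_eq_def
  proof (intro allI)
    fix u0 y
    define fs where "fs n = Fn n u0" for n
    define f where "f = F u0"
    have fsL2: "L2 T (fs n)" for n using blF[of n] by (simp add: bounded_linear_L2_def fs_def)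
    have fL2: "L2 T f" using FL2 by (simp add: f_def)
    have weak: "(\<lambda>n. L2_inner T (fs n) g) \<longlonglongrightarrow> L2_inner T f g" if "L2 T g" for g
      using wk[of u0] that by (simp add: L2_weak_conv_def fs_def f_def)
    define h where "h n s = A n (Sn n (T - s) y)" for n s
    define h0 where "h0 s = A0 (S (T - s) y)" for s
    define d where "d n s = h n s - h0 s" for n s
    define E where "E = exp (\<bar>a\<bar> * T) * norm y"
    have E0: "E \<ge> 0" by (simp add: E_def)
    have hc: "continuous_on I (h n)" for n
      unfolding h_def I_def by (rule sg_cont[OF sgSn blA])
    have h0c: "continuous_on I h0"
      unfolding h0_def I_def by (rule sg_cont[OF sgS blA0])
    have hb: "norm (h n s) \<le> C * E" if "s \<in> I" for n s
    proof -
      have "norm (h n s) \<le> C * norm (Sn n (T - s) y)" unfolding h_def by (rule C(1))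
      also have "\<dots> \<le> C * E" using sg_bound[OF sgSn that[unfolded I_def]] C(2) by (intro mult_left_mono) (auto simp: E_def)
      finally show ?thesis .
    qed
    have h0b: "norm (h0 s) \<le> CA * E" if "s \<in> I" for s
    proof -
      have "norm (h0 s) \<le> norm (S (T - s) y) * CA" unfolding h0_def by (rule CA(1))
      also have "\<dots> \<le> E * CA" using sg_bound[OF sgS that[unfolded I_def]] CA(2) by (intro mult_right_mono) (auto simp: E_def)
      finally show ?thesis by (simp add: mult.commute)
    qed
    have dc: "continuous_on I (d n)" for n unfolding d_def[abs_def] using hc h0c by (intro continuous_intros)
    have db: "norm (d n s) \<le> C * E + CA * E" if "s \<in> I" for n s
      using norm_triangle_ineq4[of "h n s" "h0 s"] hb[OF that, of n] h0b[OF that] unfolding d_def by linarith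
    have h0L2: "L2 T h0" using bdd_int(2)[OF h0c[unfolded I_def] h0b[unfolded I_def]] .
    have h0i: "integrable lborel (\<lambda>s. indicator I s * (norm (h0 s))^2)"
      using bdd_int(1)[OF h0c[unfolded I_def] h0b[unfolded I_def]] by (simp add: I_def)
    have di: "integrable lborel (\<lambda>s. indicator I s * (norm (d n s))^2)" for n
      using bdd_int(1)[OF dc[unfolded I_def] db[unfolded I_def]] by (simp add: I_def)
    have dlim_pt: "(\<lambda>n. d n s) \<longlonglongrightarrow> 0" if "s \<in> I" for s
    proof -
      have ts: "T - s > 0" using that by (simp add: I_def)
      have l1: "(\<lambda>n. norm (Sn n (T - s) y - S (T - s) y)) \<longlonglongrightarrow> 0"
        using Slim[OF ts, of y] by (simp add: tendsto_norm_zero_iff LIM_zero)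
      have l2: "(\<lambda>n. A n (S (T - s) y) - A0 (S (T - s) y)) \<longlonglongrightarrow> 0"
        using AlimA by (rule LIM_zero)
      have deq: "d n s = A n (Sn n (T - s) y - S (T - s) y) + (A n (S (T - s) y) - A0 (S (T - s) y))" for n
        by (simp add: d_def h_def h0_def linear_simps[OF blA])
      have bnd: "norm (d n s) \<le> C * norm (Sn n (T - s) y - S (T - s) y) + norm (A n (S (T - s) y) - A0 (S (T - s) y))" for n
      proof -
        have "norm (d n s) \<le> norm (A n (Sn n (T - s) y - S (T - s) y)) + norm (A n (S (T - s) y) - A0 (S (T - s) y))"
          unfolding deq by (rule norm_triangle_ineq)
        moreover have "norm (A n (Sn n (T - s) y - S (T - s) y)) \<le> C * norm (Sn n (T - s) y - S (T - s) y)"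
          by (rule C(1))
        ultimately show ?thesis by linarith
      qed
      have gl: "(\<lambda>n. C * norm (Sn n (T - s) y - S (T - s) y) + norm (A n (S (T - s) y) - A0 (S (T - s) y))) \<longlonglongrightarrow> 0"
        using tendsto_add[OF tendsto_mult_right_zero[OF l1] tendsto_norm_zero[OF l2]] by simp
      show ?thesis by (rule Lim_null_comparison[OF _ gl]) (intro always_eventually allI bnd)
    qed
    have dlim: "(\<lambda>n. \<integral>s. indicator {0<..<T} s * (norm (d n s))^2 \<partial>lborel) \<longlonglongrightarrow> 0"
    proof -
      have "(\<lambda>n. \<integral>s. indicator I s * (norm (d n s))^2 \<partial>lborel) \<longlonglongrightarrow> integral\<^sup>L (lborel :: real measure) (\<lambda>s. 0::real)"
      proof (rule integral_dominated_convergence[of "\<lambda>s. (0::real)" lborel "\<lambda>n s. indicator I s * (norm (d n s))^2" "\<lambda>s. indicator I s * (C * E + CA * E)^2"])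
        show "(\<lambda>s. 0::real) \<in> borel_measurable lborel" by simp
        show "(\<lambda>s. indicator I s * (norm (d n s))^2) \<in> borel_measurable lborel" for n
          by (rule borel_measurable_integrable[OF di])
        show "integrable lborel (\<lambda>s. indicator I s * (C * E + CA * E)^2)"
          using bdd_int(1)[of T "\<lambda>s. C * E + CA * E" "\<bar>C * E + CA * E\<bar>"] by (simp add: I_def)
        show "AE s in lborel. (\<lambda>n. indicator I s * (norm (d n s))^2) \<longlonglongrightarrow> 0"
        proof (rule AE_I2)
          fix s show "(\<lambda>n. indicator I s * (norm (d n s))^2) \<longlonglongrightarrow> 0"
          proof (cases "s \<in> I")
            case True
            have "(\<lambda>n. (norm (d n s))^2) \<longlonglongrightarrow> 0^2"
              by (intro tendsto_power tendsto_norm_zero dlim_pt[OF True])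
            then show ?thesis using True by simp
          qed simp
        qed
        show "AE s in lborel. norm (indicator I s * (norm (d n s))^2) \<le> indicator I s * (C * E + CA * E)^2" for n
        proof (rule AE_I2)
          fix s show "norm (indicator I s * (norm (d n s))^2) \<le> indicator I s * (C * E + CA * E)^2"
          proof (cases "s \<in> I")
            case True
            then have "(norm (d n s))^2 \<le> (C * E + CA * E)^2" using db by (intro power_mono) auto
            then show ?thesis using True by simp
          qed simp
        qed
      qed
      then show ?thesis by (simp add: I_def)
    qed
    have key: "(\<lambda>n. L2_inner T (fs n) (d n)) \<longlonglongrightarrow> 0"
    proof (rule key_weak[OF fsL2 _ dc[unfolded I_def] di[unfolded I_def] dlim])
      fix g :: "real \<Rightarrow> 'u" assume "L2 T g" then show "convergent (\<lambda>n. L2_inner T (fs n) g)"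
        using weak convergentI by blast
    qed
    have rew: "(LINT s:I|lborel. inner (S' (T - s) (B' (g s))) y) = L2_inner T g (\<lambda>s. A' (S' (T - s) y))"
      if sa: "selfadj_semigroup a S'" and adj: "\<And>x z. inner (B' x) z = inner x (A' z)"
      for S' :: "real \<Rightarrow> 'h \<Rightarrow> 'h" and B' :: "'u \<Rightarrow> 'h" and A' g
    proof -
      have "(LINT s:I|lborel. inner (S' (T - s) (B' (g s))) y) = (LINT s:I|lborel. inner (g s) (A' (S' (T - s) y)))"
      proof (rule set_lebesgue_integral_cong[OF Isets], intro allI impI)
        fix s assume "s \<in> I"
        then have "T - s \<ge> 0" by (simp add: I_def)
        then have "inner (S' (T - s) (B' (g s))) y = inner (B' (g s)) (S' (T - s) y)"
          using sa by (simp add: selfadj_semigroup_def)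
        also have "\<dots> = inner (g s) (A' (S' (T - s) y))" by (rule adj)
        finally show "inner (S' (T - s) (B' (g s))) y = inner (g s) (A' (S' (T - s) y))" .
      qed
      then show ?thesis by (simp add: L2_inner_def I_def)
    qed
    have Xn: "L2_inner T (fs n) (h n) = - inner (Sn n T u0) y" for n
    proof -
      have "inner (Sn n T u0) y + (LINT s:I|lborel. inner (Sn n (T - s) (Bn n (fs n s))) y) = 0"
        using fb[of n] by (simp add: feedback_operator_def null_control_eq_def fs_def I_def)
      moreover have "(LINT s:I|lborel. inner (Sn n (T - s) (Bn n (fs n s))) y) = L2_inner T (fs n) (h n)"
        unfolding h_def by (rule rew[OF sgSn adjA])
      ultimately show ?thesis by simp
    qed
    have split: "L2_inner T (fs n) (h n) = L2_inner T (fs n) h0 + L2_inner T (fs n) (d n)" for n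
    proof -
      have i1: "integrable lborel (\<lambda>s. indicator {0<..<T} s * inner (fs n s) (h0 s))"
        by (rule L2_prod_int(1)[OF fsL2 h0c[unfolded I_def] h0i[unfolded I_def], of 1]) simp
      have i2: "integrable lborel (\<lambda>s. indicator {0<..<T} s * inner (fs n s) (d n s))"
        by (rule L2_prod_int(1)[OF fsL2 dc[unfolded I_def] di[unfolded I_def], of 1]) simp
      have "indicator {0<..<T} s * inner (fs n s) (h n s) = indicator {0<..<T} s * inner (fs n s) (h0 s) + indicator {0<..<T} s * inner (fs n s) (d n s)" for s
        by (simp add: d_def inner_diff_right algebra_simps)
      then show ?thesis using i1 i2 by (simp add: L2_inner_eq)
    qed
    have lim1: "(\<lambda>n. L2_inner T (fs n) (h n)) \<longlonglongrightarrow> L2_inner T f h0 + 0"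
      unfolding split by (intro tendsto_add weak[OF h0L2] key)
    have lim2: "(\<lambda>n. L2_inner T (fs n) (h n)) \<longlonglongrightarrow> - inner (S T u0) y"
      unfolding Xn by (intro tendsto_intros Slim Tpos)
    have "L2_inner T f h0 = - inner (S T u0) y" using LIMSEQ_unique[OF lim1 lim2] by simp
    moreover have "(LINT s:{0<..<T}|lborel. inner (S (T - s) (B (F u0 s))) y) = L2_inner T f h0"
    proof -
      have "h0 = (\<lambda>s. A0 (S (T - s) y))" by (rule ext) (simp add: h0_def)
      then show ?thesis using rew[OF sgS adjA0, of f] by (simp add: I_def f_def)
    qed
    ultimately show "inner (S T u0) y + (LINT s:{0<..<T}|lborel. inner (S (T - s) (B (F u0 s))) y) = 0"
      by simp
  qed
qed

end
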